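(* Let $\mathrm{BS}$ be the Biggs-Smith graph and let $u$ be any vertex; write $D_j(u)=\{w:\operatorname{dist}(w,u)=j\}$. (1) For each $4\le i\le 6$ and each edge $(x,y)$ with $x,y\in D_i(u)$, the $(x,u)$-geodesic and the $(y,u)$-geodesic first meet at a vertex of $D_{i-4}(u)$. (2) Let $(x,y)$ be an edge with $x,y\in D_6(u)$. Then the 4-displaced paths from $x$ to $u$ and from $y$ to $u$ meet only at $u$.
   Context: The Biggs-Smith graph $\mathrm{BS}$ is the cubic graph on the $102$ vertices $ia,ib,ic,id,ie,if$ for $i\in\{1,\dots,17\}$ (indices taken modulo 17, with $0$ written as $17$), whose edges are: $ie\,ia$, $ie\,ib$, $ie\,if$, $if\,ic$, $if\,id$ for each $i$; and $ia\,(i+1)a$, $ib\,(i+4)b$, $ic\,(i+2)c$, $id\,(i+8)d$ for each $i$. In $\mathrm{BS}$, for every vertex $u$ and every $w$ with $1\le \operatorname{dist}(w,u)\le 6$ the $(w,u)$-geodesic (shortest path) is unique, and each $D_j(u)$ with $4\le j\le 6$ induces a perfect matching. For $x\in D_6(u)$, the 4-displaced path from $x$ to $u$ is the path that follows the $(x,u)$-geodesic down to its vertex in $D_4(u)$, then takes the unique edge inside $D_4(u)$ at that vertex to a vertex $z$, and then follows the $(z,u)$-geodesic to $u$. *)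

theory Defs
  imports Main
begin

text \<open>The Biggs-Smith graph. A vertex is a pair (i, t) with i < 17 (index taken mod 17,
  index 17 represented by 0) and a letter t.\<close>

datatype letter = La | Lb | Lc | Ld | Le | Lf

type_synonym bsvert = "nat \<times> letter"

definition bsV :: "bsvert set" where
  "bsV = {v. fst v < 17}"

definition bsE0 :: "bsvert \<Rightarrow> bsvert \<Rightarrow> bool" where
  "bsE0 v w \<longleftrightarrow> fst v < 17 \<and> fst w < 17 \<and>
     ((fst v = fst w \<and> (snd v, snd w) \<in> {(Le,La),(Le,Lb),(Le,Lf),(Lf,Lc),(Lf,Ld)})
    \<or> (snd v = La \<and> snd w = La \<and> fst w = (fst v + 1) mod 17)
    \<or> (snd v = Lb \<and> snd w = Lb \<and> fst w = (fst v + 4) mod 17)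
    \<or> (snd v = Lc \<and> snd w = Lc \<and> fst w = (fst v + 2) mod 17)
    \<or> (snd v = Ld \<and> snd w = Ld \<and> fst w = (fst v + 8) mod 17))"

definition bs_adj :: "bsvert \<Rightarrow> bsvert \<Rightarrow> bool" where
  "bs_adj v w \<longleftrightarrow> bsE0 v w \<or> bsE0 w v"

definition bs_walk :: "bsvert list \<Rightarrow> bsvert \<Rightarrow> bsvert \<Rightarrow> bool" where
  "bs_walk p x y \<longleftrightarrow> p \<noteq> [] \<and> hd p = x \<and> last p = y \<and> set p \<subseteq> bsV \<and>
     (\<forall>k. Suc k < length p \<longrightarrow> bs_adj (p ! k) (p ! Suc k))"

definition bs_dist :: "bsvert \<Rightarrow> bsvert \<Rightarrow> nat" where
  "bs_dist x y = (LEAST n. \<exists>p. bs_walk p x y \<and> length p = Suc n)"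

definition bsD :: "nat \<Rightarrow> bsvert \<Rightarrow> bsvert set" where
  "bsD j u = {w \<in> bsV. bs_dist w u = j}"

definition bs_geodesic :: "bsvert list \<Rightarrow> bsvert \<Rightarrow> bsvert \<Rightarrow> bool" where
  "bs_geodesic p x y \<longleftrightarrow> bs_walk p x y \<and> length p = Suc (bs_dist x y)"

definition first_meet :: "'a list \<Rightarrow> 'a list \<Rightarrow> 'a" where
  "first_meet p q = hd (filter (\<lambda>v. v \<in> set q) p)"

text \<open>4-displaced path from x \<in> D_6(u) to u: the geodesic p from x down to its vertex p!2 in
  D_4(u), then the edge to z \<in> D_4(u), then the geodesic r from z to u.\<close>
definition displaced4 :: "bsvert list \<Rightarrow> bsvert list \<Rightarrow> bsvert list" where
  "displaced4 p r = take 3 p @ r"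

end

theory Submission
  imports Defs
begin
definition nbrs :: "bsvert \<Rightarrow> bsvert list" where
 "nbrs v = (case v of (i,t) \<Rightarrow> (case t of
    La \<Rightarrow> [((i+1) mod 17, La), ((i+16) mod 17, La), (i, Le)]
  | Lb \<Rightarrow> [((i+4) mod 17, Lb), ((i+13) mod 17, Lb), (i, Le)]
  | Lc \<Rightarrow> [((i+2) mod 17, Lc), ((i+15) mod 17, Lc), (i, Lf)]
  | Ld \<Rightarrow> [((i+8) mod 17, Ld), ((i+9) mod 17, Ld), (i, Lf)]
  | Le \<Rightarrow> [(i, La), (i, Lb), (i, Lf)]
  | Lf \<Rightarrow> [(i, Le), (i, Lc), (i, Ld)]))"
definition dtab :: "letter \<Rightarrow> letter \<Rightarrow> nat list" where
  "dtab s t = (case s of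
    La \<Rightarrow> (case t of La \<Rightarrow> [0,1,2,3,4,5,6,7,6,6,7,6,5,4,3,2,1] | Lb \<Rightarrow> [2,3,4,4,3,4,5,5,4,4,5,5,4,3,4,4,3] | Lc \<Rightarrow> [3,4,4,5,5,6,6,7,6,6,7,6,6,5,5,4,4] | Ld \<Rightarrow> [3,4,5,6,6,7,6,5,4,4,5,6,7,6,6,5,4] | Le \<Rightarrow> [1,2,3,4,4,5,6,6,5,5,6,6,5,4,4,3,2] | Lf \<Rightarrow> [2,3,4,5,5,6,7,6,5,5,6,7,6,5,5,4,3])
  | Lb \<Rightarrow> (case t of La \<Rightarrow> [2,3,4,4,3,4,5,5,4,4,5,5,4,3,4,4,3] | Lb \<Rightarrow> [0,4,6,5,1,3,7,6,2,2,6,7,3,1,5,6,4] | Lc \<Rightarrow> [3,6,4,7,4,6,5,6,5,5,6,5,6,4,7,4,6] | Ld \<Rightarrow> [3,5,6,6,4,5,7,6,4,4,6,7,5,4,6,6,5] | Le \<Rightarrow> [1,4,5,5,2,4,6,6,3,3,6,6,4,2,5,5,4] | Lf \<Rightarrow> [2,5,5,6,3,5,6,7,4,4,7,6,5,3,6,5,5])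
  | Lc \<Rightarrow> (case t of La \<Rightarrow> [3,4,4,5,5,6,6,7,6,6,7,6,6,5,5,4,4] | Lb \<Rightarrow> [3,6,4,7,4,6,5,6,5,5,6,5,6,4,7,4,6] | Lc \<Rightarrow> [0,6,1,7,2,6,3,5,4,4,5,3,6,2,7,1,6] | Ld \<Rightarrow> [2,4,3,5,4,5,4,4,3,3,4,4,5,4,5,3,4] | Le \<Rightarrow> [2,5,3,6,4,7,5,6,5,5,6,5,7,4,6,3,5] | Lf \<Rightarrow> [1,5,2,6,3,6,4,5,4,4,5,4,6,3,6,2,5])
  | Ld \<Rightarrow> (case t of La \<Rightarrow> [3,4,5,6,6,7,6,5,4,4,5,6,7,6,6,5,4] | Lb \<Rightarrow> [3,5,6,6,4,5,7,6,4,4,6,7,5,4,6,6,5] | Lc \<Rightarrow> [2,4,3,5,4,5,4,4,3,3,4,4,5,4,5,3,4] | Ld \<Rightarrow> [0,2,4,6,6,7,5,3,1,1,3,5,7,6,6,4,2] | Le \<Rightarrow> [2,4,5,7,5,6,6,5,3,3,5,6,6,5,7,5,4] | Lf \<Rightarrow> [1,3,4,6,5,6,5,4,2,2,4,5,6,5,6,4,3])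
  | Le \<Rightarrow> (case t of La \<Rightarrow> [1,2,3,4,4,5,6,6,5,5,6,6,5,4,4,3,2] | Lb \<Rightarrow> [1,4,5,5,2,4,6,6,3,3,6,6,4,2,5,5,4] | Lc \<Rightarrow> [2,5,3,6,4,7,5,6,5,5,6,5,7,4,6,3,5] | Ld \<Rightarrow> [2,4,5,7,5,6,6,5,3,3,5,6,6,5,7,5,4] | Le \<Rightarrow> [0,3,4,5,3,5,7,7,4,4,7,7,5,3,5,4,3] | Lf \<Rightarrow> [1,4,4,6,4,6,6,6,4,4,6,6,6,4,6,4,4])
  | Lf \<Rightarrow> (case t of La \<Rightarrow> [2,3,4,5,5,6,7,6,5,5,6,7,6,5,5,4,3] | Lb \<Rightarrow> [2,5,5,6,3,5,6,7,4,4,7,6,5,3,6,5,5] | Lc \<Rightarrow> [1,5,2,6,3,6,4,5,4,4,5,4,6,3,6,2,5] | Ld \<Rightarrow> [1,3,4,6,5,6,5,4,2,2,4,5,6,5,6,4,3] | Le \<Rightarrow> [1,4,4,6,4,6,6,6,4,4,6,6,6,4,6,4,4] | Lf \<Rightarrow> [0,4,3,7,4,7,5,5,3,3,5,5,7,4,7,3,4]))"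
definition verts :: "bsvert list" where
 "verts = concat (map (\<lambda>t. map (\<lambda>i. (i,t)) [0..<17]) [La,Lb,Lc,Ld,Le,Lf])"
definition dd :: "bsvert \<Rightarrow> bsvert \<Rightarrow> nat" where
 "dd u v = dtab (snd u) (snd v) ! ((fst v + 17 - fst u) mod 17)"
definition par :: "bsvert \<Rightarrow> bsvert \<Rightarrow> bsvert" where
 "par u v = (if filter (\<lambda>w. dd u w + 1 = dd u v) (nbrs v) = [] then v else hd (filter (\<lambda>w. dd u w + 1 = dd u v) (nbrs v)))"
fun gpf :: "(bsvert \<Rightarrow> bsvert) \<Rightarrow> nat \<Rightarrow> bsvert \<Rightarrow> bsvert list" where
  "gpf f 0 v = [v]"
| "gpf f (Suc n) v = v # gpf f n (f v)"
definition gp :: "bsvert \<Rightarrow> bsvert \<Rightarrow> bsvert list" where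
 "gp u x = gpf (par u) (dd u x) x"
definition goodcert :: "bsvert \<Rightarrow> bool" where
 "goodcert u = (dd u u = 0
   \<and> list_all (\<lambda>v. list_all (\<lambda>w. dd u v \<le> dd u w + 1) (nbrs v)) verts
   \<and> list_all (\<lambda>v. v \<noteq> u \<longrightarrow> list_ex (\<lambda>w. dd u w + 1 = dd u v) (nbrs v)) verts
   \<and> list_all (\<lambda>v. 1 \<le> dd u v \<and> dd u v \<le> 6 \<longrightarrow> list_all (\<lambda>w. dd u w + 1 = dd u v \<longrightarrow> w = par u v) (nbrs v)) verts)"
definition disj2 :: "bsvert \<Rightarrow> bsvert list \<Rightarrow> bsvert list \<Rightarrow> bool" where
 "disj2 u A B = (u \<in> set A \<and> u \<in> set B \<and> list_all (\<lambda>v. if v \<in> set B then v = u else True) A)"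
definition "c1m u x gx gy = (filter (\<lambda>v. v \<in> set gy) gx \<noteq> [] \<and> fst (first_meet gx gy) < 17 \<and> dd u (first_meet gx gy) = dd u x - 4)"
definition "c1y u x gx y = (if dd u x = dd u y then c1m u x gx (gp u y) else True)"
definition "c1g u x gx = list_all (c1y u x gx) (nbrs x)"
definition "c1x u x = (if 4 \<le> dd u x \<and> dd u x \<le> 6 then c1g u x (gp u x) else True)"
definition "check1 u = list_all (c1x u) verts"
definition "c2w u A gy z' = (if dd u z' = 4 then disj2 u A (take 3 gy @ gp u z') else True)"
definition "c2zz u A gy = list_all (c2w u A gy) (nbrs (gy ! 2))"
definition "c2z u gx gy z = (if dd u z = 4 then c2zz u (take 3 gx @ gp u z) gy else True)"
definition "c2h u gx gy = list_all (c2z u gx gy) (nbrs (gx ! 2))"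
definition "c2y u gx y = (if dd u y = 6 then c2h u gx (gp u y) else True)"
definition "c2g u x gx = list_all (c2y u gx) (nbrs x)"
definition "c2x u x = (if dd u x = 6 then c2g u x (gp u x) else True)"
definition "check2 u = list_all (c2x u) verts"

definition rot :: "nat \<Rightarrow> bsvert \<Rightarrow> bsvert" where
 "rot k v = ((fst v + k) mod 17, snd v)"

lemma mod17_int: "((a+k) mod 17 + 17 - (b+k) mod 17) mod (17::int) = (a + 17 - b) mod 17"
proof -
  have 1: "(a+k) mod 17 + 17 - (b+k) mod 17 = ((a+k) mod 17 - (b+k) mod 17) + 17" by simp
  have 2: "((a+k) mod 17 - (b+k) mod 17) mod 17 = ((a+k) - (b+k)) mod 17" by (rule mod_diff_eq)
  have 3: "a + 17 - b = (a + k - (b + k)) + 17" by simp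
  show ?thesis unfolding 1 3 mod_add_self2 2 ..
qed
lemma mod17_lemma: "b < 17 \<Longrightarrow> ((a+k) mod 17 + 17 - (b+k) mod 17) mod (17::nat) = (a + 17 - b) mod 17"
proof -
  assume b: "b < 17"
  have le: "(b+k) mod 17 \<le> (a+k) mod 17 + 17" by simp
  have "int (((a+k) mod 17 + 17 - (b+k) mod 17) mod 17) = ((int a+int k) mod 17 + 17 - (int b+int k) mod 17) mod 17"
    using le by (simp add: of_nat_diff zmod_int)
  also have "\<dots> = (int a + 17 - int b) mod 17" by (rule mod17_int)
  also have "\<dots> = int ((a + 17 - b) mod 17)" using b by (simp add: of_nat_diff zmod_int)
  finally show ?thesis by simp
qed

lemma modinv: "i < 17 \<Longrightarrow> c \<le> 17 \<Longrightarrow> ((i + c) mod 17 + (17 - c)) mod (17::nat) = i"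
proof -
  assume "i < 17" "c \<le> 17"
  then have "((i + c) mod 17 + (17 - c)) mod 17 = (i + c + (17 - c)) mod 17" by (simp only: mod_add_left_eq)
  also have "\<dots> = (i + 17) mod 17" using \<open>c \<le> 17\<close> by simp
  finally show ?thesis using \<open>i < 17\<close> by simp
qed

lemma nbrs_rot: "nbrs (rot k v) = map (rot k) (nbrs v)"
  by (cases v; rename_tac i t; case_tac t) (simp_all add: nbrs_def rot_def mod_simps add_ac)

lemma verts_iff: "v \<in> set verts \<longleftrightarrow> fst v < 17"
  by (cases v; rename_tac i t; case_tac t) (auto simp: verts_def)

lemma modinv_i0: "i < 17 \<Longrightarrow> ((i + 1) mod 17 + 16) mod (17::nat) = i"
  using modinv[of i 1] by simp
lemma modinv_i1: "i < 17 \<Longrightarrow> ((i + 16) mod 17 + 1) mod (17::nat) = i"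
  using modinv[of i 16] by simp
lemma modinv_i2: "i < 17 \<Longrightarrow> ((i + 4) mod 17 + 13) mod (17::nat) = i"
  using modinv[of i 4] by simp
lemma modinv_i3: "i < 17 \<Longrightarrow> ((i + 13) mod 17 + 4) mod (17::nat) = i"
  using modinv[of i 13] by simp
lemma modinv_i4: "i < 17 \<Longrightarrow> ((i + 2) mod 17 + 15) mod (17::nat) = i"
  using modinv[of i 2] by simp
lemma modinv_i5: "i < 17 \<Longrightarrow> ((i + 15) mod 17 + 2) mod (17::nat) = i"
  using modinv[of i 15] by simp
lemma modinv_i6: "i < 17 \<Longrightarrow> ((i + 8) mod 17 + 9) mod (17::nat) = i"
  using modinv[of i 8] by simp
lemma modinv_i7: "i < 17 \<Longrightarrow> ((i + 9) mod 17 + 8) mod (17::nat) = i"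
  using modinv[of i 9] by simp

lemmas modinv_inst = modinv_i0 modinv_i1 modinv_i2 modinv_i3 modinv_i4 modinv_i5 modinv_i6 modinv_i7
lemmas modinv_simps = modinv_inst[simplified]

lemma adj_nbrs: "fst v < 17 \<Longrightarrow> bs_adj v w \<longleftrightarrow> w \<in> set (nbrs v)"
  apply (cases v; cases w; rename_tac i t j t'; case_tac t; case_tac t')
  apply (auto simp: bs_adj_def bsE0_def nbrs_def modinv_simps)
  done

section \<open>Rotation\<close>

lemma rot_fst: "fst (rot k v) < 17" by (simp add: rot_def)

lemma rot_inj: "fst v < 17 \<Longrightarrow> fst w < 17 \<Longrightarrow> rot k v = rot k w \<longleftrightarrow> v = w"
proof (cases v; cases w)
  fix a t b t' assume v: "v = (a, t)" "w = (b,t')" "fst v < 17" "fst w < 17"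
  have "(a + k) mod 17 = (b + k) mod 17 \<Longrightarrow> a = b"
  proof -
    assume e: "(a + k) mod 17 = (b + k) mod 17"
    have "(a + k mod 17) mod 17 = (b + k mod 17) mod 17" using e by (simp add: mod_simps)
    moreover have c: "k mod 17 \<le> 17" by simp
    moreover have "a < 17" "b < 17" using v by auto
    ultimately show "a = b" using modinv[OF _ c, of a] modinv[OF _ c, of b] by metis
  qed
  then show ?thesis using v by (auto simp: rot_def)
qed

lemma rot_back: "fst v < 17 \<Longrightarrow> rot k (rot (17 - k mod 17) v) = v"
proof (cases v)
  fix a t assume v: "v = (a,t)" "fst v < 17"
  have "((a + (17 - k mod 17)) mod 17 + k) mod 17 = ((a + (17 - k mod 17)) mod 17 + k mod 17) mod 17"
    by (simp add: mod_simps)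
  also have "\<dots> = a"
  proof -
    have c: "17 - k mod 17 \<le> 17" by simp
    have "a < 17" using v by simp
    from modinv[OF this c] show ?thesis by simp
  qed
  finally show ?thesis using v by (simp add: rot_def)
qed

lemma rot_surj_all: "(\<forall>v. fst v < 17 \<longrightarrow> P v) \<longleftrightarrow> (\<forall>v. fst v < 17 \<longrightarrow> P (rot k v))"
  by (metis rot_back rot_fst)

lemma list_all_verts: "list_all P verts \<longleftrightarrow> (\<forall>v. fst v < 17 \<longrightarrow> P v)"
  by (auto simp: list_all_iff verts_iff)

lemma list_all_verts_rot: "list_all P verts \<longleftrightarrow> list_all (\<lambda>v. P (rot k v)) verts"
  unfolding list_all_verts using rot_surj_all by blast

lemma dd_rot: "fst u < 17 \<Longrightarrow> dd (rot k u) (rot k v) = dd u v"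
  by (simp add: dd_def rot_def mod17_lemma)

lemma nbrs_fst: "fst v < 17 \<Longrightarrow> w \<in> set (nbrs v) \<Longrightarrow> fst w < 17"
  by (cases v; rename_tac i t; case_tac t) (auto simp: nbrs_def)

lemma par_rot: "fst u < 17 \<Longrightarrow> par (rot k u) (rot k v) = rot k (par u v)"
  by (simp add: par_def nbrs_rot filter_map comp_def dd_rot hd_map)

lemma par_fst: "fst v < 17 \<Longrightarrow> fst (par u v) < 17"
proof (cases "filter (\<lambda>w. dd u w + 1 = dd u v) (nbrs v) = []")
  case False
  assume v: "fst v < 17"
  let ?F = "filter (\<lambda>w. dd u w + 1 = dd u v) (nbrs v)"
  have "hd ?F \<in> set ?F" using False by (rule hd_in_set)
  then have "hd ?F \<in> set (nbrs v)" by simp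
  then show ?thesis using False v nbrs_fst by (simp add: par_def)
qed (simp add: par_def)

lemma gpf_rot: "(\<And>v. f (rot k v) = rot k (g v)) \<Longrightarrow> gpf f n (rot k v) = map (rot k) (gpf g n v)"
  by (induction n arbitrary: v) auto

lemma gp_rot: "fst u < 17 \<Longrightarrow> gp (rot k u) (rot k x) = map (rot k) (gp u x)"
  unfolding gp_def by (simp add: dd_rot gpf_rot par_rot)

lemma gpf_fst: "fst v < 17 \<Longrightarrow> w \<in> set (gpf (par u) n v) \<Longrightarrow> fst w < 17"
proof (induction n arbitrary: v)
  case (Suc n)
  show ?case
  proof (cases "w = v")
    case False
    then have "w \<in> set (gpf (par u) n (par u v))" using Suc.prems(2) by simp
    then show ?thesis using Suc.IH[OF par_fst[OF Suc.prems(1)]] by blast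
  qed (use Suc.prems in simp)
qed simp

lemma gp_fst: "fst v < 17 \<Longrightarrow> w \<in> set (gp u v) \<Longrightarrow> fst w < 17"
  unfolding gp_def using gpf_fst by blast

lemma gpf_len: "length (gpf f n v) = Suc n"
  by (induction n arbitrary: v) auto

lemma gpf_nth: "k \<le> n \<Longrightarrow> gpf f n v ! k = (f ^^ k) v"
proof (induction n arbitrary: v k)
  case 0 then show ?case by simp
next
  case (Suc n) then show ?case
    by (cases k) (simp_all add: funpow_swap1)
qed

lemma gp_len: "length (gp u x) = Suc (dd u x)"
  by (simp add: gp_def gpf_len)

definition okl :: "bsvert list \<Rightarrow> bool" where "okl A = (\<forall>v\<in>set A. fst v < 17)"

lemma okl_gp: "fst x < 17 \<Longrightarrow> okl (gp u x)" using gp_fst okl_def by blast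

lemma rot_inj_on: "okl A \<Longrightarrow> okl B \<Longrightarrow> inj_on (rot k) (set A \<union> set B)"
  unfolding okl_def inj_on_def using rot_inj by blast

lemma mem_map_rot: "okl A \<Longrightarrow> fst v < 17 \<Longrightarrow> rot k v \<in> set (map (rot k) A) \<longleftrightarrow> v \<in> set A"
proof -
  assume A: "okl A" and v: "fst v < 17"
  have "rot k v \<in> set (map (rot k) A) \<longleftrightarrow> (\<exists>a\<in>set A. rot k v = rot k a)" by auto
  also have "\<dots> \<longleftrightarrow> (\<exists>a\<in>set A. v = a)" using A v rot_inj unfolding okl_def by blast
  finally show ?thesis by simp
qed

lemma filter_rot: "okl A \<Longrightarrow> okl B \<Longrightarrow>
   filter (\<lambda>v. v \<in> set (map (rot k) B)) (map (rot k) A) = map (rot k) (filter (\<lambda>v. v \<in> set B) A)"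
proof -
  assume A: "okl A" and B: "okl B"
  have "filter (\<lambda>v. rot k v \<in> set (map (rot k) B)) A = filter (\<lambda>v. v \<in> set B) A"
    by (rule filter_cong[OF refl]) (use A B mem_map_rot in \<open>auto simp: okl_def\<close>)
  then show ?thesis by (simp add: filter_map comp_def)
qed

lemma first_meet_rot: "okl A \<Longrightarrow> okl B \<Longrightarrow> filter (\<lambda>v. v \<in> set B) A \<noteq> [] \<Longrightarrow>
   first_meet (map (rot k) A) (map (rot k) B) = rot k (first_meet A B)"
  unfolding first_meet_def by (simp only: filter_rot) (simp add: hd_map)

lemma first_meet_fst: "okl A \<Longrightarrow> filter (\<lambda>v. v \<in> set B) A \<noteq> [] \<Longrightarrow> fst (first_meet A B) < 17"
  unfolding first_meet_def okl_def by (metis filter_is_subset hd_in_set subsetD)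

lemma c1m_rot: "fst u < 17 \<Longrightarrow> okl A \<Longrightarrow> okl B \<Longrightarrow>
   c1m (rot k u) (rot k x) (map (rot k) A) (map (rot k) B) = c1m u x A B"
proof -
  assume u: "fst u < 17" and A: "okl A" and B: "okl B"
  note F = filter_rot[OF A B, of k]
  show ?thesis
  proof (cases "filter (\<lambda>v. v \<in> set B) A = []")
    case True
    then show ?thesis unfolding c1m_def by (simp only: F) simp
  next
    case False
    then show ?thesis unfolding c1m_def
      by (simp only: F first_meet_rot[OF A B False] dd_rot[OF u])
        (simp add: rot_fst first_meet_fst[OF A False])
  qed
qed

lemma c1y_rot: "fst u < 17 \<Longrightarrow> fst x < 17 \<Longrightarrow> fst y < 17 \<Longrightarrow> okl A \<Longrightarrow>
   c1y (rot k u) (rot k x) (map (rot k) A) (rot k y) = c1y u x A y"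
  unfolding c1y_def by (simp add: dd_rot gp_rot c1m_rot okl_gp)

lemma c1g_rot: "fst u < 17 \<Longrightarrow> fst x < 17 \<Longrightarrow> okl A \<Longrightarrow>
   c1g (rot k u) (rot k x) (map (rot k) A) = c1g u x A"
  unfolding c1g_def nbrs_rot list_all_iff
  by (auto simp: c1y_rot nbrs_fst)

lemma c1x_rot: "fst u < 17 \<Longrightarrow> fst x < 17 \<Longrightarrow> c1x (rot k u) (rot k x) = c1x u x"
  unfolding c1x_def by (simp add: dd_rot gp_rot c1g_rot okl_gp)

lemma check1_rot: "fst u < 17 \<Longrightarrow> check1 (rot k u) = check1 u"
  unfolding check1_def
  apply (subst list_all_verts_rot[where k=k])
  apply (simp add: list_all_verts c1x_rot)
  done

lemma okl_map: "okl (map (rot k) A)" by (auto simp: okl_def rot_fst)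
lemma okl_append: "okl (A @ B) = (okl A \<and> okl B)" by (auto simp: okl_def)
lemma okl_take: "okl A \<Longrightarrow> okl (take n A)" by (auto simp: okl_def dest: in_set_takeD)

lemma ball_map_rot: "(\<forall>v\<in>set (map (rot k) A). P v) = (\<forall>v\<in>set A. P (rot k v))" by simp

lemma disj2_rot: "fst u < 17 \<Longrightarrow> okl A \<Longrightarrow> okl B \<Longrightarrow>
   disj2 (rot k u) (map (rot k) A) (map (rot k) B) = disj2 u A B"
proof -
  assume u: "fst u < 17" and A: "okl A" and B: "okl B"
  have 1: "rot k u \<in> set (map (rot k) A) \<longleftrightarrow> u \<in> set A" by (rule mem_map_rot[OF A u])
  have 2: "rot k u \<in> set (map (rot k) B) \<longleftrightarrow> u \<in> set B" by (rule mem_map_rot[OF B u])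
  have 3: "list_all (\<lambda>v. if v \<in> set (map (rot k) B) then v = rot k u else True) (map (rot k) A)
      \<longleftrightarrow> list_all (\<lambda>v. if v \<in> set B then v = u else True) A"
    unfolding list_all_iff ball_map_rot
  proof (rule ball_cong[OF refl])
    fix v assume "v \<in> set A"
    then have v: "fst v < 17" using A okl_def by blast
    show "(if rot k v \<in> set (map (rot k) B) then rot k v = rot k u else True) =
          (if v \<in> set B then v = u else True)"
      by (simp only: mem_map_rot[OF B v] rot_inj[OF v u])
  qed
  show ?thesis unfolding disj2_def using 1 2 3 by simp
qed

lemma c2w_rot: "fst u < 17 \<Longrightarrow> fst z < 17 \<Longrightarrow> okl A \<Longrightarrow> okl B \<Longrightarrow>
   c2w (rot k u) (map (rot k) A) (map (rot k) B) (rot k z) = c2w u A B z"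
proof -
  assume u: "fst u < 17" and z: "fst z < 17" and A: "okl A" and B: "okl B"
  have eq: "take 3 (map (rot k) B) @ gp (rot k u) (rot k z) = map (rot k) (take 3 B @ gp u z)"
    by (simp add: take_map gp_rot[OF u])
  have ok: "okl (take 3 B @ gp u z)" using B z by (simp add: okl_append okl_take okl_gp)
  show ?thesis unfolding c2w_def eq dd_rot[OF u] disj2_rot[OF u A ok] ..
qed

lemma okl_nth: "okl A \<Longrightarrow> i < length A \<Longrightarrow> fst (A ! i) < 17"
  by (simp add: okl_def)

lemma c2zz_rot: "fst u < 17 \<Longrightarrow> okl A \<Longrightarrow> okl B \<Longrightarrow> 2 < length B \<Longrightarrow>
   c2zz (rot k u) (map (rot k) A) (map (rot k) B) = c2zz u A B"
proof -
  assume u: "fst u < 17" and A: "okl A" and B: "okl B" and L: "2 < length B"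
  have b2: "fst (B ! 2) < 17" using okl_nth[OF B L] .
  show ?thesis unfolding c2zz_def nth_map[OF L] nbrs_rot list_all_iff ball_map_rot
  proof (rule ball_cong[OF refl])
    fix z assume "z \<in> set (nbrs (B ! 2))"
    then have z: "fst z < 17" using nbrs_fst[OF b2] by blast
    show "c2w (rot k u) (map (rot k) A) (map (rot k) B) (rot k z) = c2w u A B z"
      by (rule c2w_rot[OF u z A B])
  qed
qed

lemma c2z_rot: "fst u < 17 \<Longrightarrow> fst z < 17 \<Longrightarrow> okl A \<Longrightarrow> okl B \<Longrightarrow> 2 < length B \<Longrightarrow>
   c2z (rot k u) (map (rot k) A) (map (rot k) B) (rot k z) = c2z u A B z"
proof -
  assume u: "fst u < 17" and z: "fst z < 17" and A: "okl A" and B: "okl B" and L: "2 < length B"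
  have eq: "take 3 (map (rot k) A) @ gp (rot k u) (rot k z) = map (rot k) (take 3 A @ gp u z)"
    by (simp add: take_map gp_rot[OF u])
  have ok: "okl (take 3 A @ gp u z)" using A z by (simp add: okl_append okl_take okl_gp)
  show ?thesis unfolding c2z_def eq dd_rot[OF u] c2zz_rot[OF u ok B L] ..
qed

lemma c2h_rot: "fst u < 17 \<Longrightarrow> okl A \<Longrightarrow> okl B \<Longrightarrow> 2 < length A \<Longrightarrow> 2 < length B \<Longrightarrow>
   c2h (rot k u) (map (rot k) A) (map (rot k) B) = c2h u A B"
proof -
  assume u: "fst u < 17" and A: "okl A" and B: "okl B" and LA: "2 < length A" and L: "2 < length B"
  have a2: "fst (A ! 2) < 17" using okl_nth[OF A LA] .
  show ?thesis unfolding c2h_def nth_map[OF LA] nbrs_rot list_all_iff ball_map_rot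
  proof (rule ball_cong[OF refl])
    fix z assume "z \<in> set (nbrs (A ! 2))"
    then have z: "fst z < 17" using nbrs_fst[OF a2] by blast
    show "c2z (rot k u) (map (rot k) A) (map (rot k) B) (rot k z) = c2z u A B z"
      by (rule c2z_rot[OF u z A B L])
  qed
qed

lemma c2y_rot: "fst u < 17 \<Longrightarrow> fst y < 17 \<Longrightarrow> okl A \<Longrightarrow> 2 < length A \<Longrightarrow>
   c2y (rot k u) (map (rot k) A) (rot k y) = c2y u A y"
  unfolding c2y_def by (simp add: dd_rot gp_rot c2h_rot okl_gp gp_len)

lemma c2g_rot: "fst u < 17 \<Longrightarrow> fst x < 17 \<Longrightarrow> okl A \<Longrightarrow> 2 < length A \<Longrightarrow>
   c2g (rot k u) (rot k x) (map (rot k) A) = c2g u x A"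
  unfolding c2g_def nbrs_rot list_all_iff
  by (auto simp: c2y_rot nbrs_fst)

lemma c2x_rot: "fst u < 17 \<Longrightarrow> fst x < 17 \<Longrightarrow> c2x (rot k u) (rot k x) = c2x u x"
  unfolding c2x_def by (simp add: dd_rot gp_rot c2g_rot okl_gp gp_len)

lemma check2_rot: "fst u < 17 \<Longrightarrow> check2 (rot k u) = check2 u"
  unfolding check2_def
  apply (subst list_all_verts_rot[where k=k])
  apply (simp add: list_all_verts c2x_rot)
  done

lemma rot_par_iff: "fst v < 17 \<Longrightarrow> w \<in> set (nbrs v) \<Longrightarrow> rot k w = rot k (par u v) \<longleftrightarrow> w = par u v"
  using rot_inj[OF nbrs_fst par_fst] by blast

lemma rot_u_iff: "fst v < 17 \<Longrightarrow> fst u < 17 \<Longrightarrow> rot k v = rot k u \<longleftrightarrow> v = u"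
  by (rule rot_inj)

lemma ball_verts: "(\<forall>v\<in>set verts. P v) = (\<forall>v. fst v < 17 \<longrightarrow> P v)"
  by (auto simp: verts_iff)

lemma goodcert_rot: "fst u < 17 \<Longrightarrow> goodcert (rot k u) = goodcert u"
  unfolding goodcert_def
  apply (subst (1 2 3) list_all_verts_rot[where k=k])
  apply (simp add: dd_rot nbrs_rot list_all_iff list_ex_iff par_rot)
  apply (simp only: ball_verts)
  apply (simp add: rot_u_iff rot_par_iff cong: imp_cong)
  done

section \<open>Semantics from certificate\<close>

lemma walk_fst: "bs_walk p x y \<Longrightarrow> k < length p \<Longrightarrow> fst (p ! k) < 17"
proof -
  assume W: "bs_walk p x y" and k: "k < length p"
  have "p ! k \<in> set p" using k by (rule nth_mem)
  then have "p ! k \<in> bsV" using W unfolding bs_walk_def by blast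
  then show ?thesis by (simp add: bsV_def)
qed

lemma walk_nbr: "bs_walk p x y \<Longrightarrow> Suc k < length p \<Longrightarrow> p ! Suc k \<in> set (nbrs (p ! k))"
proof -
  assume W: "bs_walk p x y" and k: "Suc k < length p"
  have "fst (p ! k) < 17" using walk_fst[OF W] k by simp
  moreover have "bs_adj (p ! k) (p ! Suc k)" using W k unfolding bs_walk_def by blast
  ultimately show ?thesis using adj_nbrs by blast
qed

lemma walk_bound:
  assumes G2: "\<forall>v. fst v < 17 \<longrightarrow> (\<forall>w\<in>set (nbrs v). dd u v \<le> dd u w + 1)"
    and W: "bs_walk p x y"
  shows "j < length p \<Longrightarrow> k \<le> j \<Longrightarrow> dd u (p ! k) \<le> dd u (p ! j) + (j - k)"
proof (induction j)
  case 0 then show ?case by simp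
next
  case (Suc j)
  show ?case
  proof (cases "k = Suc j")
    case True then show ?thesis by simp
  next
    case False
    then have "k \<le> j" using Suc by simp
    then have "dd u (p ! k) \<le> dd u (p ! j) + (j - k)" using Suc by simp
    moreover have "dd u (p ! j) \<le> dd u (p ! Suc j) + 1"
    proof -
      have "fst (p ! j) < 17" using walk_fst[OF W, of j] Suc.prems by simp
      moreover have "p ! Suc j \<in> set (nbrs (p ! j))" using walk_nbr[OF W, of j] Suc.prems by simp
      ultimately show ?thesis using G2 by blast
    qed
    ultimately show ?thesis using \<open>k \<le> j\<close> by simp
  qed
qed

lemma goodcert_unf:
  assumes "goodcert u"
  shows "dd u u = 0"
    and "\<forall>v. fst v < 17 \<longrightarrow> (\<forall>w\<in>set (nbrs v). dd u v \<le> dd u w + 1)"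
    and "\<forall>v. fst v < 17 \<longrightarrow> v \<noteq> u \<longrightarrow> (\<exists>w\<in>set (nbrs v). dd u w + 1 = dd u v)"
    and "\<forall>v. fst v < 17 \<longrightarrow> 1 \<le> dd u v \<and> dd u v \<le> 6 \<longrightarrow>
           (\<forall>w\<in>set (nbrs v). dd u w + 1 = dd u v \<longrightarrow> w = par u v)"
  using assms unfolding goodcert_def list_all_verts by (auto simp: list_all_iff list_ex_iff)

lemma walk_exists:
  assumes "goodcert u" "fst u < 17"
  shows "\<forall>v. fst v < 17 \<longrightarrow> dd u v = n \<longrightarrow> (\<exists>p. bs_walk p v u \<and> length p = Suc n)"
proof (induction n)
  case 0
  show ?case
  proof (intro allI impI)
    fix v :: bsvert assume v: "fst v < 17" "dd u v = 0"
    have "v = u"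
    proof (rule ccontr)
      assume "v \<noteq> u"
      then obtain w where "dd u w + 1 = dd u v" using goodcert_unf(3)[OF assms(1)] v(1) by blast
      then show False using v(2) by simp
    qed
    then show "\<exists>p. bs_walk p v u \<and> length p = Suc 0"
      using assms(2) by (intro exI[of _ "[u]"]) (simp add: bs_walk_def bsV_def)
  qed
next
  case (Suc n)
  show ?case
  proof (intro allI impI)
    fix v :: bsvert assume v: "fst v < 17" "dd u v = Suc n"
    then have "v \<noteq> u" using goodcert_unf(1)[OF assms(1)] by auto
    then obtain w where w: "w \<in> set (nbrs v)" "dd u w + 1 = dd u v"
      using goodcert_unf(3)[OF assms(1)] v by blast
    have wf: "fst w < 17" using nbrs_fst v w by blast
    have dw: "dd u w = n" using w v by simp
    obtain p where p: "bs_walk p w u" "length p = Suc n" using Suc.IH wf dw by blast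
    have "bs_walk (v # p) v u \<and> length (v # p) = Suc (Suc n)"
      using p v w wf adj_nbrs[OF v(1), of w]
      unfolding bs_walk_def bsV_def
      apply (auto simp: nth_Cons split: nat.split)
      apply (metis hd_conv_nth)
      done
    then show "\<exists>p. bs_walk p v u \<and> length p = Suc (Suc n)" by blast
  qed
qed

lemma dist_eq:
  assumes "goodcert u" "fst u < 17" "fst v < 17"
  shows "bs_dist v u = dd u v"
  unfolding bs_dist_def
proof (rule Least_equality)
  show "\<exists>p. bs_walk p v u \<and> length p = Suc (dd u v)" using walk_exists assms by blast
next
  fix n assume "\<exists>p. bs_walk p v u \<and> length p = Suc n"
  then obtain p where p: "bs_walk p v u" "length p = Suc n" by blast
  have "dd u (p ! 0) \<le> dd u (p ! n) + (n - 0)"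
    using walk_bound[OF goodcert_unf(2)[OF assms(1)] p(1), of n 0] p by simp
  moreover have "p ! 0 = v" "p ! n = u" using p unfolding bs_walk_def
    by (auto simp: hd_conv_nth last_conv_nth)
  ultimately show "dd u v \<le> n" using goodcert_unf(1)[OF assms(1)] by simp
qed

lemma bsD_iff: "goodcert u \<Longrightarrow> fst u < 17 \<Longrightarrow> v \<in> bsD n u \<longleftrightarrow> fst v < 17 \<and> dd u v = n"
proof -
  assume g: "goodcert u" and u: "fst u < 17"
  show ?thesis by (cases "fst v < 17") (simp_all add: bsD_def bsV_def dist_eq[OF g u])
qed

lemma geo_eq:
  assumes "goodcert u" "fst u < 17" "fst x < 17" "dd u x \<le> 6" "bs_geodesic p x u"
  shows "p = gp u x"
proof -
  let ?n = "dd u x"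
  have W: "bs_walk p x u" and L: "length p = Suc ?n"
    using assms dist_eq unfolding bs_geodesic_def by auto
  have ne: "p \<noteq> []" and hx: "hd p = x" and lu: "last p = u" using W unfolding bs_walk_def by auto
  have p0: "p ! 0 = x" using hx hd_conv_nth[OF ne] by simp
  have pn: "p ! ?n = u" using lu last_conv_nth[OF ne] L by simp
  have D: "dd u (p ! k) = ?n - k" if "k \<le> ?n" for k
  proof -
    have "dd u (p ! 0) \<le> dd u (p ! k) + (k - 0)"
      using walk_bound[OF goodcert_unf(2)[OF assms(1)] W, of k 0] that L by simp
    moreover have "dd u (p ! k) \<le> dd u (p ! ?n) + (?n - k)"
      using walk_bound[OF goodcert_unf(2)[OF assms(1)] W, of ?n k] that L by simp
    ultimately show ?thesis using p0 pn goodcert_unf(1)[OF assms(1)] by simp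
  qed
  have P: "p ! Suc k = par u (p ! k)" if "k < ?n" for k
  proof -
    have "p ! Suc k \<in> set (nbrs (p ! k))" using walk_nbr[OF W] that L by simp
    moreover have "dd u (p ! Suc k) + 1 = dd u (p ! k)" using D[of k] D[of "Suc k"] that by simp
    moreover have "1 \<le> dd u (p ! k) \<and> dd u (p ! k) \<le> 6" using D[of k] that assms(4) by (simp; arith)
    moreover have "fst (p ! k) < 17" using walk_fst[OF W] that L by simp
    ultimately show ?thesis using goodcert_unf(4)[OF assms(1)] by blast
  qed
  have F: "p ! k = (par u ^^ k) x" if "k \<le> ?n" for k
    using that
  proof (induction k)
    case 0 then show ?case using p0 by simp
  next
    case (Suc k) then show ?case using P[of k] by simp
  qed
  show ?thesis
    by (rule nth_equalityI) (auto simp: L gp_def gpf_len gpf_nth F)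
qed

lemma disj2_set: "disj2 u A B \<Longrightarrow> set A \<inter> set B = {u}"
proof -
  assume d: "disj2 u A B"
  have 1: "u \<in> set A" "u \<in> set B" using d unfolding disj2_def by auto
  have 2: "\<forall>v\<in>set A. (if v \<in> set B then v = u else True)" using d unfolding disj2_def list_all_iff by blast
  have 3: "\<forall>v\<in>set A. v \<in> set B \<longrightarrow> v = u"
  proof (intro ballI impI)
    fix v assume "v \<in> set A" "v \<in> set B"
    then show "v = u" using 2 by force
  qed
  show ?thesis using 1 3 by blast
qed

lemma part1:
  assumes g: "goodcert u" and u: "fst u < 17" and c: "check1 u"
    and i: "i \<in> {4..6}" and x: "x \<in> bsD i u" and y: "y \<in> bsD i u" and a: "bs_adj x y"
    and p: "bs_geodesic p x u" and q: "bs_geodesic q y u"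
  shows "first_meet p q \<in> bsD (i - 4) u"
proof -
  have xf: "fst x < 17" "dd u x = i" using x bsD_iff[OF g u] by auto
  have yf: "fst y < 17" "dd u y = i" using y bsD_iff[OF g u] by auto
  have pe: "p = gp u x" using geo_eq[OF g u xf(1) _ p] xf i by simp
  have qe: "q = gp u y" using geo_eq[OF g u yf(1) _ q] yf i by simp
  have yn: "y \<in> set (nbrs x)" using adj_nbrs[OF xf(1)] a by simp
  have "c1x u x" using c xf(1) unfolding check1_def list_all_verts by blast
  then have "c1g u x (gp u x)" using xf i unfolding c1x_def by simp
  then have "c1y u x (gp u x) y" using yn unfolding c1g_def list_all_iff by blast
  then have "c1m u x (gp u x) (gp u y)" using xf yf unfolding c1y_def by simp
  then have "fst (first_meet p q) < 17 \<and> dd u (first_meet p q) = i - 4"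
    unfolding c1m_def pe qe using xf by simp
  then show ?thesis using bsD_iff[OF g u] by simp
qed

lemma part2:
  assumes g: "goodcert u" and u: "fst u < 17" and c: "check2 u"
    and x: "x \<in> bsD 6 u" and y: "y \<in> bsD 6 u" and a: "bs_adj x y"
    and p: "bs_geodesic p x u" and q: "bs_geodesic q y u"
    and z: "z \<in> bsD 4 u" and az: "bs_adj (p ! 2) z" and r: "bs_geodesic r z u"
    and z': "z' \<in> bsD 4 u" and az': "bs_adj (q ! 2) z'" and s: "bs_geodesic s z' u"
  shows "set (displaced4 p r) \<inter> set (displaced4 q s) = {u}"
proof -
  have xf: "fst x < 17" "dd u x = 6" using x bsD_iff[OF g u] by auto
  have yf: "fst y < 17" "dd u y = 6" using y bsD_iff[OF g u] by auto
  have zf: "fst z < 17" "dd u z = 4" using z bsD_iff[OF g u] by auto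
  have zf': "fst z' < 17" "dd u z' = 4" using z' bsD_iff[OF g u] by auto
  have pe: "p = gp u x" using geo_eq[OF g u xf(1) _ p] xf by simp
  have qe: "q = gp u y" using geo_eq[OF g u yf(1) _ q] yf by simp
  have re: "r = gp u z" using geo_eq[OF g u zf(1) _ r] zf by simp
  have se: "s = gp u z'" using geo_eq[OF g u zf'(1) _ s] zf' by simp
  have lp: "2 < length (gp u x)" using gp_len xf by simp
  have lq: "2 < length (gp u y)" using gp_len yf by simp
  have p2: "fst (gp u x ! 2) < 17" using okl_nth[OF okl_gp[OF xf(1)] lp] .
  have q2: "fst (gp u y ! 2) < 17" using okl_nth[OF okl_gp[OF yf(1)] lq] .
  have yn: "y \<in> set (nbrs x)" using adj_nbrs[OF xf(1)] a by simp
  have zn: "z \<in> set (nbrs (gp u x ! 2))" using adj_nbrs[OF p2] az pe by simp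
  have zn': "z' \<in> set (nbrs (gp u y ! 2))" using adj_nbrs[OF q2] az' qe by simp
  have "c2x u x" using c xf(1) unfolding check2_def list_all_verts by blast
  then have "c2g u x (gp u x)" using xf unfolding c2x_def by simp
  then have "c2y u (gp u x) y" using yn unfolding c2g_def list_all_iff by blast
  then have "c2h u (gp u x) (gp u y)" using yf unfolding c2y_def by simp
  then have "c2z u (gp u x) (gp u y) z" using zn unfolding c2h_def list_all_iff by blast
  then have "c2zz u (take 3 (gp u x) @ gp u z) (gp u y)" using zf unfolding c2z_def by simp
  then have "c2w u (take 3 (gp u x) @ gp u z) (gp u y) z'" using zn' unfolding c2zz_def list_all_iff by blast
  then have "disj2 u (take 3 (gp u x) @ gp u z) (take 3 (gp u y) @ gp u z')"
    using zf' unfolding c2w_def by simp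
  then show ?thesis unfolding displaced4_def pe qe re se by (rule disj2_set)
qed

lemma comp_La: "goodcert (0, La) \<and> check1 (0, La) \<and> check2 (0, La)" by code_simp
lemma comp_Lb: "goodcert (0, Lb) \<and> check1 (0, Lb) \<and> check2 (0, Lb)" by code_simp
lemma comp_Lc: "goodcert (0, Lc) \<and> check1 (0, Lc) \<and> check2 (0, Lc)" by code_simp
lemma comp_Ld: "goodcert (0, Ld) \<and> check1 (0, Ld) \<and> check2 (0, Ld)" by code_simp
lemma comp_Le: "goodcert (0, Le) \<and> check1 (0, Le) \<and> check2 (0, Le)" by code_simp
lemma comp_Lf: "goodcert (0, Lf) \<and> check1 (0, Lf) \<and> check2 (0, Lf)" by code_simp

lemma comp_all: "fst u < 17 \<Longrightarrow> goodcert u \<and> check1 u \<and> check2 u"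
proof -
  assume u: "fst u < 17"
  have e: "u = rot (fst u) (0, snd u)" using u by (cases u) (simp add: rot_def)
  have b: "goodcert (0, snd u) \<and> check1 (0, snd u) \<and> check2 (0, snd u)"
    using comp_La comp_Lb comp_Lc comp_Ld comp_Le comp_Lf by (cases "snd u") simp_all
  show ?thesis
    apply (subst (1 2 3) e)
    using b by (simp add: goodcert_rot check1_rot check2_rot)
qed

theorem corollary2p6:
  assumes "u \<in> bsV"
  shows
   "(\<forall>i \<in> {4..6}. \<forall>x y p q.
        x \<in> bsD i u \<and> y \<in> bsD i u \<and> bs_adj x y \<and>
        bs_geodesic p x u \<and> bs_geodesic q y u
        \<longrightarrow> first_meet p q \<in> bsD (i - 4) u)
  \<and> (\<forall>x y p q z z' r s.
        x \<in> bsD 6 u \<and> y \<in> bsD 6 u \<and> bs_adj x y \<and>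
        bs_geodesic p x u \<and> bs_geodesic q y u \<and>
        z \<in> bsD 4 u \<and> bs_adj (p ! 2) z \<and> bs_geodesic r z u \<and>
        z' \<in> bsD 4 u \<and> bs_adj (q ! 2) z' \<and> bs_geodesic s z' u
        \<longrightarrow> set (displaced4 p r) \<inter> set (displaced4 q s) = {u})"
proof -
  have u: "fst u < 17" using assms by (simp add: bsV_def)
  have c: "goodcert u" "check1 u" "check2 u" using comp_all[OF u] by auto
  show ?thesis
    using part1[OF c(1) u c(2)] part2[OF c(1) u c(3)] by blast
qed
end
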